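(* Let $0<\alpha<1$ and for integers $n\ge 2$ define $w_k^{(\alpha)}=(-1)^k\binom{\alpha}{k}$, $$W_n^0=\sum_{k=0}^{n-1}w_k^{(\alpha)},\qquad W_n^1=nW_n^0-\sum_{k=0}^{n-1}k\,w_k^{(\alpha)}-\frac{(n-\alpha/2)^{1-\alpha}}{\Gamma(2-\alpha)}.$$ Then, as $n\to\infty$, $$W_n^0=\frac{1}{\Gamma(1-\alpha)n^\alpha}-\frac{\alpha+1}{2\Gamma(-\alpha)n^{1+\alpha}}+\frac{(2+\alpha)(1+3\alpha)}{24\,\Gamma(-1-\alpha)n^{2+\alpha}}+O\!\left(\frac{1}{n^{3+\alpha}}\right),$$ $$W_n^1=\frac{\alpha-2}{24\,\Gamma(-\alpha)n^{1+\alpha}}+O\!\left(\frac{1}{n^{2+\alpha}}\right).$$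
   Context: Binomial coefficients with real upper argument are $\binom{a}{k}=\frac{a(a-1)\cdots(a-k+1)}{k!}$, $\binom{a}{0}=1$. $\Gamma$ is the Euler gamma function, extended to negative non-integer arguments by analytic continuation. *)

theory Defs
  imports "HOL-Analysis.Analysis" "HOL-Library.Landau_Symbols"
begin

definition wcoef :: "real \<Rightarrow> nat \<Rightarrow> real" where
  "wcoef \<alpha> k = (-1) ^ k * (\<alpha> gchoose k)"

definition W0 :: "real \<Rightarrow> nat \<Rightarrow> real" where
  "W0 \<alpha> n = (\<Sum>k<n. wcoef \<alpha> k)"

definition W1 :: "real \<Rightarrow> nat \<Rightarrow> real" where
  "W1 \<alpha> n = real n * W0 \<alpha> n - (\<Sum>k<n. real k * wcoef \<alpha> k)
      - (real n - \<alpha> / 2) powr (1 - \<alpha>) / Gamma (2 - \<alpha>)"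

end

theory Submission
  imports Defs "HOL-Real_Asymp.Real_Asymp"
begin

lemma wcoef_Suc: "real (Suc n) * wcoef a (Suc n) = (real n - a) * wcoef a n"
proof -
  have "a * (a gchoose n) = of_nat n * (a gchoose n) + of_nat (Suc n) * (a gchoose (Suc n))"
    by (rule gbinomial_mult_1)
  then have "of_nat (Suc n) * (a gchoose (Suc n)) = (a - real n) * (a gchoose n)"
    by (simp add: algebra_simps)
  moreover have "real (Suc n) * wcoef a (Suc n) = -((-1)^n * (of_nat (Suc n) * (a gchoose Suc n)))"
    by (simp add: wcoef_def)
  moreover have "(real n - a) * wcoef a n = -((-1)^n * ((a - real n) * (a gchoose n)))"
    by (simp add: wcoef_def algebra_simps)
  ultimately show ?thesis by simp
qed

lemma nW: "real n * wcoef a n = - a * W0 a n"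
proof (induction n)
  case 0 then show ?case by (simp add: W0_def)
next
  case (Suc n)
  have "W0 a (Suc n) = W0 a n + wcoef a n" by (simp add: W0_def)
  then show ?case using wcoef_Suc[of n a] Suc.IH by (simp add: algebra_simps)
qed

lemma W0_Suc: "n \<ge> 1 \<Longrightarrow> W0 a (Suc n) = W0 a n * (real n - a) / real n"
proof -
  assume "n \<ge> 1"
  have "W0 a (Suc n) = W0 a n + wcoef a n" by (simp add: W0_def)
  moreover have "wcoef a n = - a * W0 a n / real n" using nW[of n a] \<open>n \<ge> 1\<close>
    by (simp add: field_simps)
  ultimately show ?thesis using \<open>n \<ge> 1\<close> by (simp add: field_simps)
qed

lemma W0_gchoose: "W0 a (Suc n) = (-1)^n * ((a - 1) gchoose n)"
proof (induction n)
  case 0 then show ?case by (simp add: W0_def wcoef_def)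
next
  case (Suc n)
  have "W0 a (Suc (Suc n)) = W0 a (Suc n) + wcoef a (Suc n)" by (simp add: W0_def)
  also have "a gchoose Suc n = ((a - 1) gchoose n) + ((a - 1) gchoose Suc n)"
    using gbinomial_Suc_Suc[of "a - 1" n] by simp
  ultimately show ?case using Suc.IH by (simp add: wcoef_def algebra_simps)
qed

lemma S1: assumes "n \<ge> 1" "a < 1" shows "real n * W0 a n - (\<Sum>k<n. real k * wcoef a k) = (real n - a) * W0 a n / (1 - a)"
  using assms(1)
proof (induction n rule: nat_induct_at_least)
  case base then show ?case using assms(2) by (simp add: W0_def wcoef_def)
next
  case (Suc n)
  have e1: "W0 a (Suc n) = W0 a n * (real n - a) / real n" using W0_Suc Suc by simp
  have e2: "real n * wcoef a n = - a * W0 a n" by (rule nW)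
  have "real (Suc n) * W0 a (Suc n) - (\<Sum>k<Suc n. real k * wcoef a k)
     = real (Suc n) * W0 a (Suc n) - (\<Sum>k<n. real k * wcoef a k) - real n * wcoef a n" by simp
  also have "\<dots> = real (Suc n) * W0 a (Suc n) - real n * W0 a n + (real n - a) * W0 a n / (1 - a) + a * W0 a n"
    using Suc e2 assms(2) by (simp add: field_simps)
  also have "\<dots> = (real (Suc n) - a) * W0 a (Suc n) / (1 - a)"
  proof -
    have h: "real n * W0 a (Suc n) = (real n - a) * W0 a n" using e1 Suc by (simp add: field_simps)
    have "a * (real n * W0 a (Suc n)) = a * ((real n - a) * W0 a n)" using h by simp
    show ?thesis using h assms(2) apply (simp add: field_simps) by (metis distrib_left)
  qed
  finally show ?case .
qed

lemma not_npi: "0 < a \<Longrightarrow> a < 1 \<Longrightarrow> (- a - real k) \<notin> \<int>"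
proof
  assume "0 < a" "a < 1" "(- a - real k) \<in> \<int>"
  then obtain m where "- a - real k = of_int m" by (auto elim: Ints_cases)
  then have "a = of_int (- m - int k)" by simp
  with \<open>0 < a\<close> \<open>a < 1\<close> show False by (metis of_int_0_less_iff of_int_less_1_iff not_less zero_less_one_class.zero_le_one int_one_le_iff_zero_less less_le_not_le)
qed

lemma b_lim:
  assumes "0 < a" "a < 1"
  shows "(\<lambda>n. W0 a n * real n powr a) \<longlonglongrightarrow> 1 / Gamma (1 - a)"
proof -
  have L: "(\<lambda>n. ((a - 1) gchoose n) / ((-1)^n / exp ((a - 1 + 1) * of_real (ln (real n)))))
      \<longlonglongrightarrow> inverse (Gamma (- (a - 1)))"
    by (rule gbinomial_asymptotic)
  have "eventually (\<lambda>n. ((a - 1) gchoose n) / ((-1)^n / exp ((a - 1 + 1) * of_real (ln (real n))))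
      = W0 a (Suc n) * real n powr a) sequentially"
    using eventually_gt_at_top[of "0::nat"]
  proof eventually_elim
    case (elim n)
    then show ?case by (simp add: W0_gchoose powr_def field_simps)
  qed
  from Lim_transform_eventually[OF L this]
  have L2: "(\<lambda>n. W0 a (Suc n) * real n powr a) \<longlonglongrightarrow> 1 / Gamma (1 - a)"
    by (simp add: divide_inverse)
  have L3: "(\<lambda>n::nat. (real (Suc n) / real n) powr a) \<longlonglongrightarrow> 1"
    by real_asymp
  have "(\<lambda>n. W0 a (Suc n) * real n powr a * (real (Suc n) / real n) powr a) \<longlonglongrightarrow> 1 / Gamma (1 - a) * 1"
    by (rule tendsto_mult[OF L2 L3])
  moreover have "eventually (\<lambda>n. W0 a (Suc n) * real n powr a * (real (Suc n) / real n) powr a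
      = W0 a (Suc n) * real (Suc n) powr a) sequentially"
    using eventually_gt_at_top[of "0::nat"]
  proof eventually_elim
    case (elim n)
    then show ?case by (simp add: powr_divide)
  qed
  ultimately have "(\<lambda>n. W0 a (Suc n) * real (Suc n) powr a) \<longlonglongrightarrow> 1 / Gamma (1 - a)"
    using Lim_transform_eventually by fastforce
  then show ?thesis by (rule LIMSEQ_imp_Suc)
qed

lemma key_ineq:
  fixes k :: real assumes "k \<ge> 2"
  shows "1 / k ^ 4 \<le> 1 / (k - 1) ^ 3 - 1 / k ^ 3"
proof -
  define j where "j = k - 1"
  have j: "j \<ge> 1" "k = j + 1" using assms by (auto simp: j_def)
  have "j ^ 3 \<le> (j + 1) * ((j + 1) ^ 3 - j ^ 3)"
  proof -
    have "(j + 1) * ((j + 1) ^ 3 - j ^ 3) = (j + 1) * (3 * j^2 + 3 * j + 1)"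
      by (simp add: power3_eq_cube power2_eq_square algebra_simps)
    also have "\<dots> \<ge> j ^ 3" using j(1)
      by (simp add: power3_eq_cube power2_eq_square algebra_simps)
    finally show ?thesis .
  qed
  then have h1: "1 / (j + 1) \<le> ((j + 1) ^ 3 - j ^ 3) / j ^ 3"
    using j(1) by (simp add: divide_simps mult.commute)
  have "1 / (j+1) ^ 4 = 1 / (j + 1) * (1 / (j+1)^3)" by (simp add: power4_eq_xxxx power3_eq_cube)
  also have "\<dots> \<le> ((j + 1) ^ 3 - j ^ 3) / j ^ 3 * (1 / (j+1)^3)"
    by (rule mult_right_mono[OF h1]) (use j(1) in simp)
  also have "\<dots> = 1 / j ^ 3 - 1 / (j+1) ^ 3" using j(1) by (simp add: field_simps)
  finally have "1 / (j+1) ^ 4 \<le> 1 / j ^ 3 - 1 / (j+1) ^ 3" .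
  then show ?thesis using j by simp
qed

lemma tail:
  fixes u :: "nat \<Rightarrow> real"
  assumes lim: "u \<longlonglongrightarrow> L" and N: "N \<ge> 2" and bd: "\<forall>n\<ge>N. \<bar>u (Suc n) - u n\<bar> \<le> C / real n ^ 4"
  shows "\<forall>n\<ge>N. \<bar>u n - L\<bar> \<le> C / (real n - 1) ^ 3"
proof (intro allI impI)
  fix n assume n: "n \<ge> N"
  have C: "C \<ge> 0"
  proof -
    have "0 \<le> C / real n ^ 4" using bd n by (meson abs_ge_zero order_trans)
    moreover have "real n > 0" using n N by simp
    ultimately show ?thesis by (simp add: zero_le_divide_iff)
  qed
  have step: "\<forall>m. \<bar>u (n + m) - u n\<bar> \<le> C * (1 / (real n - 1) ^ 3 - 1 / (real (n + m) - 1) ^ 3)"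
  proof
    fix m show "\<bar>u (n + m) - u n\<bar> \<le> C * (1 / (real n - 1) ^ 3 - 1 / (real (n + m) - 1) ^ 3)"
    proof (induction m)
      case 0 then show ?case by simp
    next
      case (Suc m)
      have k: "real (n + m) \<ge> 2" using n N by simp
      have a1: "\<bar>u (Suc (n + m)) - u (n + m)\<bar> \<le> C / real (n + m) ^ 4"
        using bd \<open>n \<ge> N\<close> le_add1 order_trans by blast
      have "C / real (n + m) ^ 4 \<le> C * (1 / (real (n + m) - 1) ^ 3 - 1 / real (n + m) ^ 3)"
        using mult_left_mono[OF key_ineq[OF k] C] by simp
      then have "\<bar>u (n + Suc m) - u n\<bar> \<le> C * (1 / (real n - 1) ^ 3 - 1 / (real (n + m) - 1) ^ 3)
          + C * (1 / (real (n + m) - 1) ^ 3 - 1 / real (n + m) ^ 3)"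
        using Suc.IH a1 by (simp add: abs_le_iff)
      also have "\<dots> = C * (1 / (real n - 1) ^ 3 - 1 / (real (n + Suc m) - 1) ^ 3)"
        by (simp add: algebra_simps)
      finally show ?case .
    qed
  qed
  have lim2: "(\<lambda>m. \<bar>u (n + m) - u n\<bar>) \<longlonglongrightarrow> \<bar>L - u n\<bar>"
  proof -
    have "(\<lambda>m. u (m + n)) \<longlonglongrightarrow> L" by (rule LIMSEQ_ignore_initial_segment[OF lim])
    then have "(\<lambda>m. u (n + m)) \<longlonglongrightarrow> L" by (simp add: add.commute)
    then show ?thesis by (intro tendsto_intros)
  qed
  have "\<forall>m. \<bar>u (n + m) - u n\<bar> \<le> C / (real n - 1) ^ 3"
  proof
    fix m
    have "real (n + m) - 1 > 0" using n N by simp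
    then have "0 \<le> C * (1 / (real (n + m) - 1) ^ 3)" using C by simp
    then show "\<bar>u (n + m) - u n\<bar> \<le> C / (real n - 1) ^ 3"
      using step[rule_format, of m] by (simp add: algebra_simps)
  qed
  then have "\<bar>L - u n\<bar> \<le> C / (real n - 1) ^ 3"
    by (intro LIMSEQ_le_const2[OF lim2]) auto
  then show "\<bar>u n - L\<bar> \<le> C / (real n - 1) ^ 3" by (simp add: abs_minus_commute)
qed

definition ff :: "real \<Rightarrow> nat \<Rightarrow> real" where
  "ff a n = 1 + a*(a+1)/2/real n + a*(a+1)*(3*a+1)*(a+2)/24/real n^2"

lemma eps_bigo:
  fixes a :: real assumes "0<a" "a<1"
  shows "(\<lambda>n::nat. (real n - a)/real n * (1 + 1/real n) powr a * ff a n / ff a (Suc n) - 1)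
     \<in> O(\<lambda>n. 1/real n^4)"
  unfolding ff_def of_nat_Suc
  using assms by (real_asymp simp add: field_simps power2_eq_square power3_eq_cube)

lemma ff_pos: "0 < a \<Longrightarrow> ff a n > 0"
  unfolding ff_def by (intro add_pos_nonneg) (auto intro!: divide_nonneg_nonneg mult_nonneg_nonneg)

lemma ff_lim: "ff a \<longlonglongrightarrow> 1"
  unfolding ff_def by real_asymp

lemma b_rec:
  assumes "0 < a" "a < 1" "n \<ge> 1"
  shows "W0 a (Suc n) * real (Suc n) powr a
     = W0 a n * real n powr a * ((real n - a)/real n * (1 + 1/real n) powr a)"
proof -
  have "real (Suc n) = real n * (1 + 1 / real n)" using assms(3) by (simp add: field_simps)
  then have "real (Suc n) powr a = real n powr a * (1 + 1/real n) powr a"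
    by (simp add: powr_mult)
  then show ?thesis using W0_Suc[OF assms(3)] by (simp add: field_simps)
qed

lemma bf:
  assumes a0: "0 < a" and a1: "a < 1"
  shows "(\<lambda>n. W0 a n * real n powr a * Gamma (1 - a) - ff a n) \<in> O(\<lambda>n. 1/real n ^ 3)"
proof -
  define b where "b n = W0 a n * real n powr a * Gamma (1 - a)" for n
  define s where "s n = b n / ff a n" for n
  define q where "q n = (real n - a)/real n * (1 + 1/real n) powr a" for n :: nat
  define e where "e n = q n * ff a n / ff a (Suc n) - 1" for n
  have G: "Gamma (1 - a) > 0" using a1 by simp
  have blim: "b \<longlonglongrightarrow> 1"
  proof -
    have "(\<lambda>n. W0 a n * real n powr a * Gamma (1 - a)) \<longlonglongrightarrow> 1 / Gamma (1 - a) * Gamma (1 - a)"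
      by (intro tendsto_mult b_lim a0 a1 tendsto_const)
    then show ?thesis using G unfolding b_def by simp
  qed
  have slim: "s \<longlonglongrightarrow> 1"
    unfolding s_def using tendsto_divide[OF blim ff_lim] by simp
  have srec: "s (Suc n) - s n = s n * e n" if "n \<ge> 1" for n
  proof -
    have "b (Suc n) = b n * q n" unfolding b_def q_def using b_rec[OF a0 a1 that] by simp
    then show ?thesis unfolding s_def e_def using ff_pos[OF a0, of n] ff_pos[OF a0, of "Suc n"]
      by (simp add: field_simps)
  qed
  have "e \<in> O(\<lambda>n. 1/real n^4)" unfolding e_def q_def by (rule eps_bigo[OF a0 a1])
  then obtain c where c: "c > 0" "eventually (\<lambda>n. norm (e n) \<le> c * norm (1/real n^4)) sequentially"
    by (rule landau_o.bigE)
  from slim have "Bseq s" by (intro convergent_imp_Bseq) (auto simp: convergent_def)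
  then obtain K where K: "K > 0" "\<forall>n. norm (s n) \<le> K" by (rule BseqE)
  from c(2) obtain N0 where N0: "\<forall>n\<ge>N0. norm (e n) \<le> c * norm (1/real n^4)"
    by (auto simp: eventually_sequentially)
  define N where "N = max N0 2"
  have bd: "\<forall>n\<ge>N. \<bar>s (Suc n) - s n\<bar> \<le> (K * c) / real n ^ 4"
  proof (intro allI impI)
    fix n assume n: "n \<ge> N"
    then have "n \<ge> 1" "n \<ge> N0" by (auto simp: N_def)
    have "\<bar>s (Suc n) - s n\<bar> = \<bar>s n\<bar> * \<bar>e n\<bar>" using srec[OF \<open>n \<ge> 1\<close>] by (simp add: abs_mult)
    also have "\<dots> \<le> K * (c / real n ^ 4)"
      using K N0 \<open>n \<ge> N0\<close> by (intro mult_mono) auto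
    finally show "\<bar>s (Suc n) - s n\<bar> \<le> (K * c) / real n ^ 4" by simp
  qed
  have "\<forall>n\<ge>N. \<bar>s n - 1\<bar> \<le> (K * c) / (real n - 1) ^ 3"
    by (rule tail[OF slim _ bd]) (simp add: N_def)
  then have "(\<lambda>n. s n - 1) \<in> O(\<lambda>n. 1 / (real n - 1) ^ 3)"
  proof -
    assume H: "\<forall>n\<ge>N. \<bar>s n - 1\<bar> \<le> (K * c) / (real n - 1) ^ 3"
    have "eventually (\<lambda>n. norm (s n - 1) \<le> (K * c) * norm (1 / (real n - 1) ^ 3)) sequentially"
      using eventually_ge_at_top[of N]
    proof eventually_elim
      case (elim n)
      then have "real n - 1 > 0" by (simp add: N_def)
      then show ?case using H elim by simp
    qed
    then show ?thesis by (rule bigoI)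
  qed
  moreover have "(\<lambda>n::nat. 1 / (real n - 1) ^ 3) \<in> O(\<lambda>n. 1 / real n ^ 3)" by real_asymp
  ultimately have s1: "(\<lambda>n. s n - 1) \<in> O(\<lambda>n. 1 / real n ^ 3)" by (rule landau_o.big_trans)
  have "ff a \<in> O(\<lambda>_. 1)" unfolding ff_def by real_asymp
  from landau_o.big.mult[OF this s1]
  have "(\<lambda>n. ff a n * (s n - 1)) \<in> O(\<lambda>n. 1 / real n ^ 3)" by simp
  moreover have "ff a n * (s n - 1) = b n - ff a n" for n
    unfolding s_def using ff_pos[OF a0, of n] by (simp add: field_simps)
  ultimately show ?thesis unfolding b_def by simp
qed

lemma Gam:
  fixes a :: real
  assumes a0: "0 < a" and a1: "a < 1"
  shows "Gamma (1 - a) = - a * Gamma (- a)" "Gamma (- a) = (- 1 - a) * Gamma (- 1 - a)"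
        "Gamma (2 - a) = (1 - a) * Gamma (1 - a)"
proof -
  have n1: "- a \<notin> \<int>\<^sub>\<le>\<^sub>0" using not_npi[OF a0 a1, of 0] nonpos_Ints_Int by auto
  have n2: "- 1 - a \<notin> \<int>\<^sub>\<le>\<^sub>0" using not_npi[OF a0 a1, of 1] nonpos_Ints_Int by (auto simp: algebra_simps)
  have n3: "1 - a \<notin> \<int>\<^sub>\<le>\<^sub>0" using a1 by auto
  show "Gamma (1 - a) = - a * Gamma (- a)" using Gamma_plus1[OF n1] by simp
  show "Gamma (- a) = (- 1 - a) * Gamma (- 1 - a)" using Gamma_plus1[OF n2] by simp
  show "Gamma (2 - a) = (1 - a) * Gamma (1 - a)" using Gamma_plus1[OF n3] by (simp add: algebra_simps)
qed

lemma g_bigo: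
  fixes a :: real assumes "0<a" "a<1"
  shows "(\<lambda>n::nat. (real n - a) * ff a n / real n powr a
     - (real n - a/2) powr (1 - a) + a*(1-a)*(a-2)/24 / real n powr (1 + a)) \<in> O(\<lambda>n. 1 / real n powr (2 + a))"
  unfolding ff_def using assms by (real_asymp simp add: field_simps power2_eq_square power3_eq_cube)

lemma p1:
  fixes a x p G :: real assumes "x>0" "p>0" "G>0" "a>0"
  shows "1 / (G * p) - (a + 1) / (2 * (- G / a) * (x * p))
              + (2 + a) * (1 + 3 * a) / (24 * (G / (a * (1 + a))) * (x^2 * p))
   = (1 + a*(a+1)/2/x + a*(a+1)*(3*a+1)*(a+2)/24/x^2) / (G * p)"
  using assms by (simp add: field_simps)

lemma p2:
  fixes a x p G B F Q :: real assumes "x>0" "p>0" "G>0" "a>0" "a<1"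
  shows "((x - a) / p * (B - F) + ((x - a) * F / p - Q + a*(1-a)*(a-2)/24 / (x*p))) / ((1 - a) * G)
      = ((x - a) * (B / (G * p)) / (1 - a) - Q / ((1 - a) * G)) - (a - 2) / (24 * (- G / a) * (x * p))"
proof -
  have nz: "1 - a \<noteq> 0" "a \<noteq> 0" "G \<noteq> 0" "p \<noteq> 0" "x \<noteq> 0" using assms by auto
  have 1: "(x - a) / p * (B - F) + ((x - a) * F / p - Q + a*(1-a)*(a-2)/24 / (x*p))
     = (x - a) * B / p - Q + a*(1-a)*(a-2)/24 / (x*p)" using nz by (simp add: field_simps)
  have 2: "((x - a) * B / p) / ((1 - a) * G) = (x - a) * (B / (G * p)) / (1 - a)" using nz by (simp add: field_simps)
  have 3: "(a*(1-a)*(a-2)/24 / (x*p)) / ((1 - a) * G) = - ((a - 2) / (24 * (- G / a) * (x * p)))"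
    using nz by (simp add: field_simps)
  have "((x - a) / p * (B - F) + ((x - a) * F / p - Q + a*(1-a)*(a-2)/24 / (x*p))) / ((1 - a) * G)
     = ((x - a) * B / p - Q + a*(1-a)*(a-2)/24 / (x*p)) / ((1 - a) * G)" by (simp only: 1)
  also have "\<dots> = ((x - a) * B / p) / ((1 - a) * G) - Q / ((1 - a) * G) + (a*(1-a)*(a-2)/24 / (x*p)) / ((1 - a) * G)"
    by (simp only: add_divide_distrib diff_divide_distrib)
  also have "\<dots> = ((x - a) * (B / (G * p)) / (1 - a) - Q / ((1 - a) * G)) - (a - 2) / (24 * (- G / a) * (x * p))"
    by (simp only: 2 3)
  finally show ?thesis .
qed

theorem lemma2:
  fixes \<alpha> :: real
  assumes "0 < \<alpha>" and "\<alpha> < 1"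
  shows "((\<lambda>n. W0 \<alpha> n - (1 / (Gamma (1 - \<alpha>) * real n powr \<alpha>)
              - (\<alpha> + 1) / (2 * Gamma (- \<alpha>) * real n powr (1 + \<alpha>))
              + (2 + \<alpha>) * (1 + 3 * \<alpha>) / (24 * Gamma (- 1 - \<alpha>) * real n powr (2 + \<alpha>))))
           \<in> O(\<lambda>n. 1 / real n powr (3 + \<alpha>))) \<and>
         ((\<lambda>n. W1 \<alpha> n - (\<alpha> - 2) / (24 * Gamma (- \<alpha>) * real n powr (1 + \<alpha>)))
           \<in> O(\<lambda>n. 1 / real n powr (2 + \<alpha>)))"
proof -
  define a where "a = \<alpha>"
  have a0: "0 < a" and a1: "a < 1" using assms by (auto simp: a_def)
  define G where "G = Gamma (1 - a)"
  have G: "G > 0" unfolding G_def using a1 by simp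
  have Gm: "Gamma (- a) = - G / a" using Gam(1)[OF a0 a1] a0 unfolding G_def by (simp add: field_simps)
  have Gmm: "Gamma (- 1 - a) = G / (a * (1 + a))"
  proof -
    have h: "Gamma (- a) = - (1 + a) * Gamma (- 1 - a)"
      using Gam(2)[OF a0 a1] by (simp add: algebra_simps)
    have "a * (1 + a) * Gamma (- 1 - a) = G"
      unfolding G_def Gam(1)[OF a0 a1] h by (simp add: algebra_simps)
    moreover have "a * (1 + a) \<noteq> 0" using a0 by simp
    ultimately show ?thesis by (simp add: field_simps)
  qed
  have G2: "Gamma (2 - a) = (1 - a) * G" using Gam(3)[OF a0 a1] unfolding G_def by simp
  define b where "b n = W0 a n * real n powr a * G" for n
  have bf': "(\<lambda>n. b n - ff a n) \<in> O(\<lambda>n. 1/real n ^ 3)"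
    unfolding b_def G_def by (rule bf[OF a0 a1])
  have pw1: "real n powr (1 + a) = real n * real n powr a" if "n \<ge> 1" for n
    using that by (simp add: powr_add)
  have pw2: "real n powr (2 + a) = real n ^ 2 * real n powr a" if "n \<ge> 1" for n
    using that by (simp add: powr_add)
  have W0eq: "W0 a n = b n / (G * real n powr a)" if "n \<ge> 1" for n
    using that G unfolding b_def by (simp add: field_simps)
  have P1: "(\<lambda>n. W0 a n - (1 / (G * real n powr a)
              - (a + 1) / (2 * Gamma (- a) * real n powr (1 + a))
              + (2 + a) * (1 + 3 * a) / (24 * Gamma (- 1 - a) * real n powr (2 + a))))
           \<in> O(\<lambda>n. 1 / real n powr (3 + a))"
  proof -
    have X: "(\<lambda>n::nat. 1 / (G * real n powr a)) \<in> O(\<lambda>n. 1 / real n powr a)"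
      using G by real_asymp
    from landau_o.big.mult[OF bf' X]
    have "(\<lambda>n. (b n - ff a n) * (1 / (G * real n powr a))) \<in> O(\<lambda>n. 1 / real n ^ 3 * (1 / real n powr a))" .
    moreover have "(\<lambda>n::nat. 1 / real n ^ 3 * (1 / real n powr a)) \<in> O(\<lambda>n. 1 / real n powr (3 + a))"
      by real_asymp
    ultimately have Y: "(\<lambda>n. (b n - ff a n) * (1 / (G * real n powr a))) \<in> O(\<lambda>n. 1 / real n powr (3 + a))"
      by (rule landau_o.big_trans)
    have "eventually (\<lambda>n. (b n - ff a n) * (1 / (G * real n powr a)) = W0 a n - (1 / (G * real n powr a)
              - (a + 1) / (2 * Gamma (- a) * real n powr (1 + a))
              + (2 + a) * (1 + 3 * a) / (24 * Gamma (- 1 - a) * real n powr (2 + a)))) sequentially"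
      using eventually_ge_at_top[of "1::nat"]
    proof eventually_elim
      case (elim n)
      have np: "real n > 0" "real n powr a > 0" using elim by auto
      have e: "1 / (G * real n powr a) - (a + 1) / (2 * (- G / a) * (real n * real n powr a))
              + (2 + a) * (1 + 3 * a) / (24 * (G / (a * (1 + a))) * (real n ^ 2 * real n powr a))
          = ff a n / (G * real n powr a)"
        unfolding ff_def by (rule p1[OF np G a0])
      show ?case unfolding W0eq[OF elim] pw1[OF elim] pw2[OF elim] Gm Gmm e
        by (simp add: diff_divide_distrib)
    qed
    from this Y show ?thesis by (rule landau_o.big.in_cong[THEN iffD1])
  qed
  have P2: "(\<lambda>n. W1 a n - (a - 2) / (24 * Gamma (- a) * real n powr (1 + a)))
           \<in> O(\<lambda>n. 1 / real n powr (2 + a))"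
  proof -
    have X: "(\<lambda>n::nat. (real n - a) / real n powr a) \<in> O(\<lambda>n. real n powr (1 - a))"
      by real_asymp
    from landau_o.big.mult[OF X bf']
    have "(\<lambda>n. (real n - a) / real n powr a * (b n - ff a n)) \<in> O(\<lambda>n. real n powr (1 - a) * (1 / real n ^ 3))" .
    moreover have "(\<lambda>n::nat. real n powr (1 - a) * (1 / real n ^ 3)) \<in> O(\<lambda>n. 1 / real n powr (2 + a))"
      by real_asymp
    ultimately have Y1: "(\<lambda>n. (real n - a) / real n powr a * (b n - ff a n)) \<in> O(\<lambda>n. 1 / real n powr (2 + a))"
      by (rule landau_o.big_trans)
    have Y0: "(\<lambda>n. (real n - a) / real n powr a * (b n - ff a n) + ((real n - a) * ff a n / real n powr a
     - (real n - a/2) powr (1 - a) + a*(1-a)*(a-2)/24 / real n powr (1 + a)))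
        \<in> O(\<lambda>n. 1 / real n powr (2 + a))"
      by (rule sum_in_bigo(1)[OF Y1 g_bigo[OF a0 a1]])
    have G2nz: "inverse (Gamma (2 - a)) \<noteq> 0" using G2 G a1 by simp
    have Y: "(\<lambda>n. ((real n - a) / real n powr a * (b n - ff a n) + ((real n - a) * ff a n / real n powr a
     - (real n - a/2) powr (1 - a) + a*(1-a)*(a-2)/24 / real n powr (1 + a))) * inverse (Gamma (2 - a)))
        \<in> O(\<lambda>n. 1 / real n powr (2 + a))"
      by (rule landau_o.big.cmult_in_iff'[OF G2nz, THEN iffD2, OF Y0])
    have "eventually (\<lambda>n. ((real n - a) / real n powr a * (b n - ff a n) + ((real n - a) * ff a n / real n powr a
     - (real n - a/2) powr (1 - a) + a*(1-a)*(a-2)/24 / real n powr (1 + a))) * inverse (Gamma (2 - a))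
      = W1 a n - (a - 2) / (24 * Gamma (- a) * real n powr (1 + a))) sequentially"
      using eventually_ge_at_top[of "1::nat"]
    proof eventually_elim
      case (elim n)
      have np: "real n > 0" "real n powr a > 0" using elim by auto
      have W1e: "W1 a n = (real n - a) * W0 a n / (1 - a) - (real n - a / 2) powr (1 - a) / Gamma (2 - a)"
        unfolding W1_def using S1[OF elim a1] by simp
      show ?case unfolding W1e W0eq[OF elim] pw1[OF elim] Gm G2 divide_inverse[symmetric]
        by (rule p2[OF np G a0 a1])
    qed
    from this Y show ?thesis by (rule landau_o.big.in_cong[THEN iffD1])
  qed
  show ?thesis using P1 P2 unfolding a_def G_def by simp
qed

end
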